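(* Let $X$ be a compact metric space and $f:X\dashrightarrow X$ a continuous open-dense defined map which is good with respect to iterates. For every positive strong submeasure $\hat\mu$ on $\Gamma_{f,\infty}$, $$f_*(\pi_1)_*(\hat\mu)\ge(\pi_1)_*(\sigma_f)_*(\hat\mu).$$
   Context: Positive strong submeasures on a compact metric space $W$: sub-linear, bounded, non-decreasing maps $C^0(W)\to\mathbb{R}$; $\mu\le\nu$ means pointwise inequality on $C^0$. For a continuous map $g:W\to W'$ between compact metric spaces, $g_*(\mu)(\varphi)=\mu(\varphi\circ g)$. A continuous open-dense defined map $f:X\dashrightarrow X$ is a continuous map $f:\mathrm{OpenDom}(f)\to X$ with $\mathrm{OpenDom}(f)$ open dense, $I(f)=X\setminus\mathrm{OpenDom}(f)$; its pushforward is $f_*(\mu)(\varphi)=\inf\{\mu(\psi):\psi\in C^0(X),\psi\ge E(\varphi\circ f)\}$, where $E(\varphi\circ f)=\varphi\circ f$ on $\mathrm{OpenDom}(f)$ and $E(\varphi\circ f)(x)=\limsup_{y\in\mathrm{OpenDom}(f),y\to x}\varphi(f(y))$ otherwise. $\Omega_{f,\infty}=\{x\in\mathrm{OpenDom}(f):f^n(x)\notin I(f)\ \forall n\}$; $f$ is good with respect to iterates if $\Omega_{f,\infty}$ is dense and $X\setminus\Omega_{f,\infty}$ is nowhere dense. $\Gamma_{f,\infty}$ is the closure in $X^{\mathbb{N}}$ (product topology) of $\{(x,f(x),f^2(x),\ldots):x\in\Omega_{f,\infty}\}$, $\sigma_f$ is the shift map on it and $\pi_1:\Gamma_{f,\infty}\to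 X$ the first coordinate projection. *)

theory Defs
  imports "HOL-Analysis.Analysis"
begin

text \<open>Functions are total HOL functions; only their restriction to W matters
  (monotonicity is w.r.t. the pointwise order on W).\<close>
definition positive_strong_submeasure ::
  "'b::topological_space set \<Rightarrow> (('b \<Rightarrow> real) \<Rightarrow> real) \<Rightarrow> bool" where
  "positive_strong_submeasure W \<mu> \<longleftrightarrow>
     (\<forall>\<phi> \<psi>. continuous_on W \<phi> \<longrightarrow> continuous_on W \<psi> \<longrightarrow>
        \<mu> (\<lambda>x. \<phi> x + \<psi> x) \<le> \<mu> \<phi> + \<mu> \<psi>) \<and>
     (\<forall>\<phi> c. continuous_on W \<phi> \<longrightarrow> c \<ge> 0 \<longrightarrow> \<mu> (\<lambda>x. c * \<phi> x) = c * \<mu> \<phi>) \<and>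
     (\<forall>\<phi> \<psi>. continuous_on W \<phi> \<longrightarrow> continuous_on W \<psi> \<longrightarrow>
        (\<forall>x\<in>W. \<phi> x \<le> \<psi> x) \<longrightarrow> \<mu> \<phi> \<le> \<mu> \<psi>) \<and>
     (\<exists>C. \<forall>\<phi>. continuous_on W \<phi> \<longrightarrow> \<bar>\<mu> \<phi>\<bar> \<le> C * (SUP x\<in>W. \<bar>\<phi> x\<bar>)) \<and>
     (\<forall>\<phi>. continuous_on W \<phi> \<longrightarrow> (\<forall>x\<in>W. \<phi> x \<ge> 0) \<longrightarrow> \<mu> \<phi> \<ge> 0)"

definition push_cont :: "('b \<Rightarrow> 'c) \<Rightarrow> (('b \<Rightarrow> real) \<Rightarrow> real) \<Rightarrow> (('c \<Rightarrow> real) \<Rightarrow> real)" where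
  "push_cont g \<mu> = (\<lambda>\<phi>. \<mu> (\<phi> \<circ> g))"

text \<open>A continuous open-dense defined map f : X -\<rightarrow> X with OpenDom(f) = D.\<close>
definition open_dense_map :: "'a::metric_space set \<Rightarrow> 'a set \<Rightarrow> ('a \<Rightarrow> 'a) \<Rightarrow> bool" where
  "open_dense_map X D f \<longleftrightarrow> D \<subseteq> X \<and> openin (top_of_set X) D \<and> X \<subseteq> closure D \<and>
     continuous_on D f \<and> f ` D \<subseteq> X"

definition ext_comp :: "'a::topological_space set \<Rightarrow> ('a \<Rightarrow> 'a) \<Rightarrow> ('a \<Rightarrow> real) \<Rightarrow> 'a \<Rightarrow> ereal" where
  "ext_comp D f \<phi> x = (if x \<in> D then ereal (\<phi> (f x))
     else Limsup (at x within D) (\<lambda>y. ereal (\<phi> (f y))))"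

definition push_od :: "'a::topological_space set \<Rightarrow> 'a set \<Rightarrow> ('a \<Rightarrow> 'a) \<Rightarrow>
    (('a \<Rightarrow> real) \<Rightarrow> real) \<Rightarrow> (('a \<Rightarrow> real) \<Rightarrow> real)" where
  "push_od X D f \<mu> = (\<lambda>\<phi>. Inf {\<mu> \<psi> | \<psi>. continuous_on X \<psi> \<and>
       (\<forall>x\<in>X. ereal (\<psi> x) \<ge> ext_comp D f \<phi> x)})"

definition Omega_inf :: "'a set \<Rightarrow> ('a \<Rightarrow> 'a) \<Rightarrow> 'a set" where
  "Omega_inf D f = {x \<in> D. \<forall>n. (f ^^ n) x \<in> D}"

definition good_wrt_iterates :: "'a::topological_space set \<Rightarrow> 'a set \<Rightarrow> ('a \<Rightarrow> 'a) \<Rightarrow> bool" where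
  "good_wrt_iterates X D f \<longleftrightarrow> X \<subseteq> closure (Omega_inf D f) \<and>
     (top_of_set X) interior_of ((top_of_set X) closure_of (X - Omega_inf D f)) = {}"

definition Gamma_inf :: "'a::topological_space set \<Rightarrow> ('a \<Rightarrow> 'a) \<Rightarrow> (nat \<Rightarrow> 'a) set" where
  "Gamma_inf D f = closure ((\<lambda>x. \<lambda>n. (f ^^ n) x) ` Omega_inf D f)"

definition shift :: "(nat \<Rightarrow> 'a) \<Rightarrow> (nat \<Rightarrow> 'a)" where
  "shift s = (\<lambda>n. s (Suc n))"

definition proj1 :: "(nat \<Rightarrow> 'a) \<Rightarrow> 'a" where
  "proj1 s = s 0"

end

theory Submission
  imports Defs
begin

theorem proposition3p1:
  fixes X D :: "'a::metric_space set" and f :: "'a \<Rightarrow> 'a"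
    and \<mu> :: "((nat \<Rightarrow> 'a) \<Rightarrow> real) \<Rightarrow> real"
  assumes "compact X"
    and "open_dense_map X D f"
    and "good_wrt_iterates X D f"
    and "positive_strong_submeasure (Gamma_inf D f) \<mu>"
  shows "\<forall>\<phi>. continuous_on X \<phi> \<longrightarrow>
           push_od X D f (push_cont proj1 \<mu>) \<phi> \<ge> push_cont proj1 (push_cont shift \<mu>) \<phi>"
proof (intro allI impI)
  fix \<phi> :: "'a \<Rightarrow> real"
  assume phi: "continuous_on X \<phi>"
  have DX: "D \<subseteq> X" and fD: "f ` D \<subseteq> X" using assms(2) unfolding open_dense_map_def by auto
  have clX: "closed X" using assms(1) compact_imp_closed by blast
  define Orb where "Orb = (\<lambda>x. \<lambda>n. (f ^^ n) x) ` Omega_inf D f"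
  have G: "Gamma_inf D f = closure Orb" unfolding Gamma_inf_def Orb_def by simp
  have coordX: "s n \<in> X" if "s \<in> Gamma_inf D f" for s n
  proof -
    have "(\<lambda>s. s n) ` closure Orb \<subseteq> X"
      apply (rule image_closure_subset[OF _ clX])
      apply (rule continuous_on_subset[OF continuous_on_product_coordinates], simp)
      using DX unfolding Orb_def Omega_inf_def by auto
    thus ?thesis using that G by auto
  qed
  have mono: "\<mu> p \<le> \<mu> q" if "continuous_on (Gamma_inf D f) p" "continuous_on (Gamma_inf D f) q"
      "\<forall>s\<in>Gamma_inf D f. p s \<le> q s" for p q
  proof -
    have "\<forall>\<phi> \<psi>. continuous_on (Gamma_inf D f) \<phi> \<longrightarrow> continuous_on (Gamma_inf D f) \<psi> \<longrightarrow>
        (\<forall>x\<in>Gamma_inf D f. \<phi> x \<le> \<psi> x) \<longrightarrow> \<mu> \<phi> \<le> \<mu> \<psi>"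
      using assms(4) unfolding positive_strong_submeasure_def by (elim conjE) assumption
    thus ?thesis using that by blast
  qed
  have contc: "continuous_on (Gamma_inf D f) (\<lambda>s. g (s n))" if "continuous_on X g" for g :: "'a \<Rightarrow> real" and n
    apply (rule continuous_on_compose2[OF that, of _ "\<lambda>s. s n"])
    apply (rule continuous_on_subset[OF continuous_on_product_coordinates], simp)
    using coordX by auto
  let ?S = "{push_cont proj1 \<mu> \<psi> | \<psi>. continuous_on X \<psi> \<and> (\<forall>x\<in>X. ereal (\<psi> x) \<ge> ext_comp D f \<phi> x)}"
  obtain B where B: "\<And>x. x \<in> X \<Longrightarrow> \<bar>\<phi> x\<bar> \<le> B"
    using compact_imp_bounded[OF compact_continuous_image[OF phi assms(1)]]
    unfolding bounded_iff by auto
  have "ext_comp D f \<phi> x \<le> ereal B" if "x \<in> X" for x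
  proof (cases "x \<in> D")
    case True hence "f x \<in> X" using fD by auto
    hence "\<phi> (f x) \<le> B" using B abs_le_D1 by blast
    thus ?thesis using True by (simp add: ext_comp_def)
  next
    case False
    have "Limsup (at x within D) (\<lambda>y. ereal (\<phi> (f y))) \<le> ereal B"
      apply (rule Limsup_bounded)
      unfolding eventually_at_filter
      apply (rule always_eventually)
      using B fD abs_le_D1 by auto
    thus ?thesis using False by (simp add: ext_comp_def)
  qed
  hence ne: "?S \<noteq> {}" by (auto intro!: exI[of _ "\<lambda>_. B"])
  show "push_od X D f (push_cont proj1 \<mu>) \<phi> \<ge> push_cont proj1 (push_cont shift \<mu>) \<phi>"
    unfolding push_od_def
  proof (rule cInf_greatest[OF ne])
    fix v assume "v \<in> ?S"
    then obtain \<psi> where psi: "continuous_on X \<psi>" "\<forall>x\<in>X. ereal (\<psi> x) \<ge> ext_comp D f \<phi> x"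
      and v: "v = push_cont proj1 \<mu> \<psi>" by blast
    have key: "\<phi> (s 1) \<le> \<psi> (s 0)" if "s \<in> Gamma_inf D f" for s
    proof -
      have cg: "continuous_on (closure Orb) (\<lambda>s. \<psi> (s 0) - \<phi> (s 1))"
        using contc[OF psi(1)] contc[OF phi] G by (auto intro: continuous_intros)
      have "0 \<le> \<psi> (s 0) - \<phi> (s 1)"
      proof (rule continuous_ge_on_closure[OF cg])
        show "s \<in> closure Orb" using that G by simp
      next
        fix t assume "t \<in> Orb"
        then obtain x where x: "x \<in> Omega_inf D f" "t = (\<lambda>n. (f ^^ n) x)" unfolding Orb_def by auto
        hence xD: "x \<in> D" unfolding Omega_inf_def by auto
        have "ereal (\<phi> (f x)) \<le> ereal (\<psi> x)" using psi(2) xD DX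
          by (metis ext_comp_def subsetD)
        thus "0 \<le> \<psi> (t 0) - \<phi> (t 1)" using x by simp
      qed
      thus ?thesis by simp
    qed
    show "push_cont proj1 (push_cont shift \<mu>) \<phi> \<le> v"
      unfolding v push_cont_def proj1_def shift_def o_def
      using mono[OF contc[OF phi, of 1] contc[OF psi(1), of 0]] key by simp
  qed
qed

end
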